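(* Let $X,Y$ be Banach spaces over $\mathbb{K}\in\{\mathbb{R},\mathbb{C}\}$ and let $G\in L(X,Y)$ with $\|G\|=1$. If $n_G^{(2)}(X,Y)=1$, then $n_G^{(1)}(X,Y)= n_G(X,Y)$.
   Context: For $T\in L(X,Y)$: $\|T\|_G := \inf_{\delta>0}\sup\{\|Tx\|: x\in S_X,\ \|Gx\|>1-\delta\}$ ($S_X$ the unit sphere); $V_G(T):=\bigcap_{\delta>0}\overline{\{y^*(Tx): x\in S_X,\ y^*\in S_{Y^*},\ \operatorname{Re} y^*(Gx)>1-\delta\}}$, $\nu_G(T):=\max\{|\lambda|:\lambda\in V_G(T)\}$. The numerical indices are $n_G(X,Y):=\inf\{\nu_G(T):\|T\|=1\}=\max\{k\ge0: k\|T\|\le\nu_G(T)\ \forall T\}$, $n_G^{(1)}(X,Y):=\inf\{\|T\|_G:\|T\|=1\}=\max\{k\ge0: k\|T\|\le\|T\|_G\ \forall T\}$, $n_G^{(2)}(X,Y):=\inf\{\nu_G(T):\|T\|_G=1\}=\max\{k\ge0: k\|T\|_G\le\nu_G(T)\ \forall T\}$, all over $T\in L(X,Y)$. Standing assumption of the paper: $\|\cdot\|_G$ is a norm on $L(X,Y)$. *)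

theory Defs
  imports "HOL-Analysis.Analysis"
begin

text \<open>
Scalars K in {R, C} are handled uniformly by a flag cplx.  A Banach space
over K is a real Banach space (type class banach); if cplx holds it carries a
complex structure J (multiplication by the imaginary unit), compatible with
the norm: norm ((a + i b) x) = |a + i b| norm x.
\<close>

definition scalar_structure :: "bool \<Rightarrow> ('a::real_normed_vector \<Rightarrow> 'a) \<Rightarrow> bool" where
  "scalar_structure cplx J \<longleftrightarrow>
     (cplx \<longrightarrow> linear J \<and> (\<forall>x. J (J x) = - x) \<and>
        (\<forall>a b x. norm (a *\<^sub>R x + b *\<^sub>R J x) = cmod (Complex a b) * norm x))"

definition kop :: "bool \<Rightarrow> ('a::real_normed_vector \<Rightarrow> 'a) \<Rightarrow> ('b::real_normed_vector \<Rightarrow> 'b)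
    \<Rightarrow> ('a \<Rightarrow> 'b) \<Rightarrow> bool" where
  "kop cplx JX JY T \<longleftrightarrow> bounded_linear T \<and> (cplx \<longrightarrow> (\<forall>x. T (JX x) = JY (T x)))"

text \<open>Y*: bounded K-linear functionals, as complex-valued maps
 (real-valued in the real case).\<close>
definition kfun :: "bool \<Rightarrow> ('b::real_normed_vector \<Rightarrow> 'b) \<Rightarrow> ('b \<Rightarrow> complex) \<Rightarrow> bool" where
  "kfun cplx J f \<longleftrightarrow> bounded_linear f \<and>
     (if cplx then (\<forall>y. f (J y) = \<i> * f y) else (\<forall>y. Im (f y) = 0))"

definition dual_sphere :: "bool \<Rightarrow> ('b::real_normed_vector \<Rightarrow> 'b) \<Rightarrow> ('b \<Rightarrow> complex) set" where
  "dual_sphere cplx J = {f. kfun cplx J f \<and> onorm f = 1}"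

definition Gnorm :: "('a::real_normed_vector \<Rightarrow> 'b::real_normed_vector) \<Rightarrow> ('a \<Rightarrow> 'b) \<Rightarrow> real" where
  "Gnorm G T = (INF \<delta>\<in>{0<..}. SUP x\<in>{x. norm x = 1 \<and> norm (G x) > 1 - \<delta>}. norm (T x))"

definition Vrange :: "bool \<Rightarrow> ('b::real_normed_vector \<Rightarrow> 'b) \<Rightarrow> ('a::real_normed_vector \<Rightarrow> 'b)
    \<Rightarrow> ('a \<Rightarrow> 'b) \<Rightarrow> complex set" where
  "Vrange cplx JY G T = (\<Inter>\<delta>\<in>{0<..}. closure
     {f (T x) | x f. norm x = 1 \<and> f \<in> dual_sphere cplx JY \<and> Re (f (G x)) > 1 - \<delta>})"

text \<open>Numerical radius (the maximum is attained, so it equals the supremum).\<close>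
definition nradius :: "bool \<Rightarrow> ('b::real_normed_vector \<Rightarrow> 'b) \<Rightarrow> ('a::real_normed_vector \<Rightarrow> 'b)
    \<Rightarrow> ('a \<Rightarrow> 'b) \<Rightarrow> real" where
  "nradius cplx JY G T = Sup (cmod ` Vrange cplx JY G T)"

definition nG :: "bool \<Rightarrow> ('a::real_normed_vector \<Rightarrow> 'a) \<Rightarrow> ('b::real_normed_vector \<Rightarrow> 'b)
    \<Rightarrow> ('a \<Rightarrow> 'b) \<Rightarrow> real" where
  "nG cplx JX JY G = Inf {nradius cplx JY G T | T. kop cplx JX JY T \<and> onorm T = 1}"

definition nG1 :: "bool \<Rightarrow> ('a::real_normed_vector \<Rightarrow> 'a) \<Rightarrow> ('b::real_normed_vector \<Rightarrow> 'b)
    \<Rightarrow> ('a \<Rightarrow> 'b) \<Rightarrow> real" where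
  "nG1 cplx JX JY G = Inf {Gnorm G T | T. kop cplx JX JY T \<and> onorm T = 1}"

definition nG2 :: "bool \<Rightarrow> ('a::real_normed_vector \<Rightarrow> 'a) \<Rightarrow> ('b::real_normed_vector \<Rightarrow> 'b)
    \<Rightarrow> ('a \<Rightarrow> 'b) \<Rightarrow> real" where
  "nG2 cplx JX JY G = Inf {nradius cplx JY G T | T. kop cplx JX JY T \<and> Gnorm G T = 1}"

definition Gnorm_is_norm :: "bool \<Rightarrow> ('a::real_normed_vector \<Rightarrow> 'a) \<Rightarrow> ('b::real_normed_vector \<Rightarrow> 'b)
    \<Rightarrow> ('a \<Rightarrow> 'b) \<Rightarrow> bool" where
  "Gnorm_is_norm cplx JX JY G \<longleftrightarrow>
     (\<forall>T. kop cplx JX JY T \<longrightarrow> 0 \<le> Gnorm G T \<and> (Gnorm G T = 0 \<longleftrightarrow> T = (\<lambda>x. 0))) \<and>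
     (\<forall>T S. kop cplx JX JY T \<and> kop cplx JX JY S \<longrightarrow>
         Gnorm G (\<lambda>x. T x + S x) \<le> Gnorm G T + Gnorm G S) \<and>
     (\<forall>T c. kop cplx JX JY T \<longrightarrow> Gnorm G (\<lambda>x. c *\<^sub>R T x) = \<bar>c\<bar> * Gnorm G T) \<and>
     (\<forall>T a b. cplx \<and> kop cplx JX JY T \<longrightarrow>
         Gnorm G (\<lambda>x. a *\<^sub>R T x + b *\<^sub>R JY (T x)) = cmod (Complex a b) * Gnorm G T)"

end

theory Submission
  imports Defs
begin


definition lgraph :: "('b::real_normed_vector \<times> real) set \<Rightarrow> bool" where
"lgraph H \<longleftrightarrow> (0,0) \<in> H \<and> (\<forall>v a w b. (v,a)\<in>H \<longrightarrow> (w,b)\<in>H \<longrightarrow> (v+w,a+b)\<in>H)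
   \<and> (\<forall>c v a. (v,a)\<in>H \<longrightarrow> (c *\<^sub>R v, c*a)\<in>H) \<and> (\<forall>v a b. (v,a)\<in>H \<longrightarrow> (v,b)\<in>H \<longrightarrow> a=b)
   \<and> (\<forall>v a. (v,a)\<in>H \<longrightarrow> a \<le> norm v)"

lemma lgraph_extend:
  fixes M :: "('b::real_normed_vector \<times> real) set"
  assumes M: "lgraph M" and z: "\<forall>a. (z,a) \<notin> M"
  shows "\<exists>M'. lgraph M' \<and> M \<subseteq> M' \<and> M' \<noteq> M"
proof -
  have M0: "(0,0)\<in>M" and Madd: "\<And>v a w b. (v,a)\<in>M \<Longrightarrow> (w,b)\<in>M \<Longrightarrow> (v+w,a+b)\<in>M"
    and Msc: "\<And>c v a. (v,a)\<in>M \<Longrightarrow> (c *\<^sub>R v, c*a)\<in>M"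
    and Mfun: "\<And>v a b. (v,a)\<in>M \<Longrightarrow> (v,b)\<in>M \<Longrightarrow> a=b"
    and Mdom: "\<And>v a. (v,a)\<in>M \<Longrightarrow> a \<le> norm v"
    using M unfolding lgraph_def by blast+
  define S where "S = {a - norm (u - z) | u a. (u,a)\<in>M}"
  define c where "c = Sup S"
  have key: "a - norm (u - z) \<le> norm (w + z) - b" if "(u,a)\<in>M" "(w,b)\<in>M" for u a w b
  proof -
    have "a + b \<le> norm (u + w)" using Mdom[OF Madd[OF that]] .
    also have "u + w = (u - z) + (w + z)" by simp
    also have "norm ((u - z) + (w + z)) \<le> norm (u - z) + norm (w + z)" by (rule norm_triangle_ineq)
    finally show ?thesis by simp
  qed
  have Sne: "S \<noteq> {}" using M0 unfolding S_def by blast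
  have Sbdd: "bdd_above S" unfolding S_def bdd_above_def using key[OF _ M0] by blast
  have hc1: "a - norm (u - z) \<le> c" if "(u,a)\<in>M" for u a
    unfolding c_def by (rule cSup_upper[OF _ Sbdd]) (use that S_def in blast)
  have hc2: "c \<le> norm (w + z) - b" if "(w,b)\<in>M" for w b
    unfolding c_def by (rule cSup_least[OF Sne]) (use that key S_def in blast)
  define M' where "M' = {(v + t *\<^sub>R z, a + t*c) | v a t. (v,a)\<in>M}"
  have M'I: "(v + t *\<^sub>R z, a + t*c) \<in> M'" if "(v,a)\<in>M" for v a t
    using that unfolding M'_def by blast
  have "lgraph M'"
    unfolding lgraph_def
  proof (intro conjI allI impI)
    show "(0,0)\<in>M'" using M'I[OF M0, of 0] by simp
  next
    fix v a w b assume "(v,a)\<in>M'" "(w,b)\<in>M'"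
    then obtain v1 a1 t1 v2 a2 t2 where 1: "(v1,a1)\<in>M" "v = v1 + t1 *\<^sub>R z" "a = a1 + t1*c"
      and 2: "(v2,a2)\<in>M" "w = v2 + t2 *\<^sub>R z" "b = a2 + t2*c" unfolding M'_def by blast
    have "(v1 + v2 + (t1+t2) *\<^sub>R z, a1 + a2 + (t1+t2)*c) \<in> M'"
      by (rule M'I[OF Madd[OF 1(1) 2(1)]])
    moreover have "v1 + v2 + (t1+t2) *\<^sub>R z = v + w" using 1 2 by (simp add: algebra_simps)
    moreover have "a1 + a2 + (t1+t2)*c = a + b" using 1 2 by (simp add: algebra_simps)
    ultimately show "(v+w,a+b)\<in>M'" by simp
  next
    fix r v a assume "(v,a)\<in>M'"
    then obtain v1 a1 t1 where 1: "(v1,a1)\<in>M" "v = v1 + t1 *\<^sub>R z" "a = a1 + t1*c"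
      unfolding M'_def by blast
    have "(r *\<^sub>R v1 + (r*t1) *\<^sub>R z, r*a1 + (r*t1)*c) \<in> M'"
      by (rule M'I[OF Msc[OF 1(1)]])
    then show "(r *\<^sub>R v, r*a)\<in>M'" using 1 by (simp add: algebra_simps)
  next
    fix v a b assume "(v,a)\<in>M'" "(v,b)\<in>M'"
    then obtain v1 a1 t1 v2 a2 t2 where 1: "(v1,a1)\<in>M" "v = v1 + t1 *\<^sub>R z" "a = a1 + t1*c"
      and 2: "(v2,a2)\<in>M" "v = v2 + t2 *\<^sub>R z" "b = a2 + t2*c" unfolding M'_def by blast
    show "a = b"
    proof (cases "t1 = t2")
      case True
      then have "v1 = v2" using 1 2 by simp
      then show ?thesis using Mfun[OF 1(1)] 2 1 True by simp
    next
      case False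
      have d: "(v2 - v1, a2 - a1) \<in> M" using Madd[OF 2(1) Msc[OF 1(1), of "-1"]] by simp
      have "(inverse (t1 - t2)) *\<^sub>R (v2 - v1) = z"
      proof -
        have "v2 - v1 = (t1 - t2) *\<^sub>R z" using 1 2 by (simp add: algebra_simps)
        then show ?thesis using False by simp
      qed
      then show ?thesis using Msc[OF d, of "inverse (t1 - t2)"] z by metis
    qed
  next
    fix v a assume "(v,a)\<in>M'"
    then obtain v1 a1 t where 1: "(v1,a1)\<in>M" "v = v1 + t *\<^sub>R z" "a = a1 + t*c"
      unfolding M'_def by blast
    show "a \<le> norm v"
    proof (cases "t = 0")
      case True then show ?thesis using Mdom[OF 1(1)] 1 by simp
    next
      case False
      show ?thesis
      proof (cases "t > 0")
        case True
        have "c \<le> norm (inverse t *\<^sub>R v1 + z) - inverse t * a1" using hc2[OF Msc[OF 1(1)]] .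
        then have "t * c \<le> t * (norm (inverse t *\<^sub>R v1 + z) - inverse t * a1)"
          using True by (simp add: mult_left_mono)
        also have "\<dots> = norm (t *\<^sub>R (inverse t *\<^sub>R v1 + z)) - a1"
          using True by (simp add: right_diff_distrib)
        also have "t *\<^sub>R (inverse t *\<^sub>R v1 + z) = v" using 1 True by (simp add: algebra_simps)
        finally show ?thesis using 1 by simp
      next
        case False2: False
        define s where "s = - t"
        have s: "s > 0" using False False2 s_def by simp
        define w where "w = inverse s *\<^sub>R v1 - z"
        have "inverse s * a1 - norm w \<le> c" using hc1[OF Msc[OF 1(1)]] w_def by simp
        then have "s * (inverse s * a1 - norm w) \<le> s * c"
          using s by (simp add: mult_left_mono)
        moreover have "s * (inverse s * a1) = a1" using s by simp
        ultimately have "a1 - s * norm w \<le> s * c" by (simp add: right_diff_distrib)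
        moreover have "norm (s *\<^sub>R w) = s * norm w" using s by simp
        moreover have "s *\<^sub>R w = v" using 1 s s_def unfolding w_def scaleR_right_diff_distrib by simp
        ultimately have "norm v = s * norm w" "a1 - s * norm w \<le> s * c" by metis+
        then show ?thesis using 1 s_def by simp
      qed
    qed
  qed
  moreover have "M \<subseteq> M'" using M'I[of _ _ 0] by auto
  moreover have "(z, c) \<in> M'" using M'I[OF M0, of 1] by simp
  ultimately show ?thesis using z by blast
qed

lemma lgraph_0: "lgraph H \<Longrightarrow> (0,0)\<in>H" unfolding lgraph_def by blast
lemma lgraph_add: "lgraph H \<Longrightarrow> (v,a)\<in>H \<Longrightarrow> (w,b)\<in>H \<Longrightarrow> (v+w,a+b)\<in>H" unfolding lgraph_def by blast
lemma lgraph_sc: "lgraph H \<Longrightarrow> (v,a)\<in>H \<Longrightarrow> (c *\<^sub>R v, c*a)\<in>H" unfolding lgraph_def by blast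
lemma lgraph_fun: "lgraph H \<Longrightarrow> (v,a)\<in>H \<Longrightarrow> (v,b)\<in>H \<Longrightarrow> a = b" unfolding lgraph_def by blast
lemma lgraph_dom: "lgraph H \<Longrightarrow> (v,a)\<in>H \<Longrightarrow> a \<le> norm v" unfolding lgraph_def by blast

lemma lgraph_chain:
  assumes C: "C \<in> chains {H. lgraph H \<and> (y, norm y) \<in> H}" and ne: "C \<noteq> {}"
  shows "lgraph (\<Union>C) \<and> (y, norm y) \<in> \<Union>C"
proof -
  have sub: "\<And>H. H \<in> C \<Longrightarrow> lgraph H \<and> (y, norm y) \<in> H" and ch: "\<And>H1 H2. H1\<in>C \<Longrightarrow> H2\<in>C \<Longrightarrow> H1 \<subseteq> H2 \<or> H2 \<subseteq> H1"
    using C unfolding chains_def chain_subset_def by blast+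
  obtain H where H: "H \<in> C" using ne by blast
  show ?thesis
    unfolding lgraph_def
  proof (intro conjI allI impI)
    have "(0,0) \<in> H" using sub[OF H] lgraph_0 by blast
    then show "(0,0) \<in> \<Union>C" using H by blast
    show "(y, norm y) \<in> \<Union>C" using sub[OF H] H by blast
  next
    fix v a w b assume "(v,a)\<in>\<Union>C" "(w,b)\<in>\<Union>C"
    then obtain H1 H2 where h: "H1\<in>C" "H2\<in>C" "(v,a)\<in>H1" "(w,b)\<in>H2" by blast
    have "\<exists>H\<in>C. (v,a)\<in>H \<and> (w,b)\<in>H" using ch[OF h(1,2)] h by blast
    then obtain H where "H\<in>C" "(v,a)\<in>H" "(w,b)\<in>H" by blast
    moreover then have "lgraph H" using sub by blast
    ultimately show "(v+w,a+b)\<in>\<Union>C" using lgraph_add by blast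
  next
    fix r v a assume "(v,a)\<in>\<Union>C"
    then obtain H1 where "H1\<in>C" "(v,a)\<in>H1" by blast
    moreover then have "lgraph H1" using sub by blast
    ultimately show "(r *\<^sub>R v, r*a)\<in>\<Union>C" using lgraph_sc by blast
  next
    fix v a b assume "(v,a)\<in>\<Union>C" "(v,b)\<in>\<Union>C"
    then obtain H1 H2 where h: "H1\<in>C" "H2\<in>C" "(v,a)\<in>H1" "(v,b)\<in>H2" by blast
    have "\<exists>H\<in>C. (v,a)\<in>H \<and> (v,b)\<in>H" using ch[OF h(1,2)] h by blast
    then obtain H where "H\<in>C" "(v,a)\<in>H" "(v,b)\<in>H" by blast
    moreover then have "lgraph H" using sub by blast
    ultimately show "a = b" using lgraph_fun by blast
  next
    fix v a assume "(v,a)\<in>\<Union>C"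
    then obtain H1 where "H1\<in>C" "(v,a)\<in>H1" by blast
    moreover then have "lgraph H1" using sub by blast
    ultimately show "a \<le> norm v" using lgraph_dom by blast
  qed
qed

lemma hahn_banach_real:
  fixes y :: "'b::real_normed_vector" assumes y: "y \<noteq> 0"
  shows "\<exists>g::'b\<Rightarrow>real. (\<forall>v w. g (v+w) = g v + g w) \<and> (\<forall>r v. g (r *\<^sub>R v) = r * g v)
     \<and> (\<forall>v. \<bar>g v\<bar> \<le> norm v) \<and> g y = norm y"
proof -
  define A where "A = {H. lgraph H \<and> (y, norm y) \<in> H}"
  define H0 where "H0 = {(t *\<^sub>R y, t * norm y) | t. True}"
  have "lgraph H0"
    unfolding lgraph_def H0_def
  proof (intro conjI allI impI)
    show "((0::'b), (0::real)) \<in> {(t *\<^sub>R y, t * norm y) |t. True}" by (rule CollectI, rule exI[of _ 0]) simp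
  next
    fix v a w b assume "(v,a) \<in> {(t *\<^sub>R y, t * norm y) |t. True}" "(w,b) \<in> {(t *\<^sub>R y, t * norm y) |t. True}"
    then obtain t1 t2 where "v = t1 *\<^sub>R y" "a = t1 * norm y" "w = t2 *\<^sub>R y" "b = t2 * norm y" by blast
    then show "(v+w,a+b) \<in> {(t *\<^sub>R y, t * norm y) |t. True}"
      by (intro CollectI exI[of _ "t1+t2"]) (simp add: algebra_simps)
  next
    fix r v a assume "(v,a) \<in> {(t *\<^sub>R y, t * norm y) |t. True}"
    then obtain t1 where "v = t1 *\<^sub>R y" "a = t1 * norm y" by blast
    then show "(r *\<^sub>R v, r*a) \<in> {(t *\<^sub>R y, t * norm y) |t. True}"
      by (intro CollectI exI[of _ "r*t1"]) (simp add: algebra_simps)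
  next
    fix v a b assume "(v,a) \<in> {(t *\<^sub>R y, t * norm y) |t. True}" "(v,b) \<in> {(t *\<^sub>R y, t * norm y) |t. True}"
    then obtain t1 t2 where "v = t1 *\<^sub>R y" "a = t1 * norm y" "v = t2 *\<^sub>R y" "b = t2 * norm y" by blast
    then show "a = b" using y by (metis scaleR_cancel_right)
  next
    fix v a assume "(v,a) \<in> {(t *\<^sub>R y, t * norm y) |t. True}"
    then obtain t1 where "v = t1 *\<^sub>R y" "a = t1 * norm y" by blast
    then show "a \<le> norm v" by (simp add: mult_right_mono)
  qed
  moreover have "(y, norm y) \<in> H0" unfolding H0_def by (rule CollectI, rule exI[of _ 1]) simp
  ultimately have H0A: "H0 \<in> A" unfolding A_def by blast
  have "\<forall>C\<in>chains A. \<exists>U\<in>A. \<forall>X\<in>C. X \<subseteq> U"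
  proof
    fix C assume C: "C \<in> chains A"
    show "\<exists>U\<in>A. \<forall>X\<in>C. X \<subseteq> U"
    proof (cases "C = {}")
      case True then show ?thesis using H0A by blast
    next
      case False
      then have "\<Union>C \<in> A" using lgraph_chain[OF C[unfolded A_def]] unfolding A_def by blast
      then show ?thesis by blast
    qed
  qed
  from Zorn_Lemma2[OF this] obtain M where MA: "M \<in> A" and Mmax: "\<forall>X\<in>A. M \<subseteq> X \<longrightarrow> X = M" by blast
  have M: "lgraph M" and yM: "(y, norm y) \<in> M" using MA unfolding A_def by auto
  have tot: "\<exists>a. (z,a) \<in> M" for z
  proof (rule ccontr)
    assume "\<nexists>a. (z, a) \<in> M"
    then obtain M' where "lgraph M'" "M \<subseteq> M'" "M' \<noteq> M" using lgraph_extend[OF M] by blast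
    moreover then have "M' \<in> A" using yM unfolding A_def by blast
    ultimately show False using Mmax by blast
  qed
  have Madd: "\<And>v a w b. (v,a)\<in>M \<Longrightarrow> (w,b)\<in>M \<Longrightarrow> (v+w,a+b)\<in>M"
    and Msc: "\<And>c v a. (v,a)\<in>M \<Longrightarrow> (c *\<^sub>R v, c*a)\<in>M"
    and Mfun: "\<And>v a b. (v,a)\<in>M \<Longrightarrow> (v,b)\<in>M \<Longrightarrow> a=b"
    and Mdom: "\<And>v a. (v,a)\<in>M \<Longrightarrow> a \<le> norm v"
    using M lgraph_add lgraph_sc lgraph_fun lgraph_dom by blast+
  define g where "g z = (THE a. (z,a) \<in> M)" for z
  have gM: "(z, g z) \<in> M" for z
    unfolding g_def using tot[of z] Mfun by (metis theI)
  have gI: "g z = a" if "(z,a)\<in>M" for z a using Mfun[OF gM that] .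
  show ?thesis
  proof (intro exI[of _ g] conjI allI)
    fix v w show "g (v+w) = g v + g w" using gI[OF Madd[OF gM gM]] .
  next
    fix r v show "g (r *\<^sub>R v) = r * g v" using gI[OF Msc[OF gM]] .
  next
    fix v
    have "g v \<le> norm v" using Mdom[OF gM] .
    moreover have "g ((-1) *\<^sub>R v) = - g v" using gI[OF Msc[OF gM, of "-1" v]] by simp
    moreover have "g ((-1) *\<^sub>R v) \<le> norm v" using Mdom[OF gM, of "(-1) *\<^sub>R v"] by simp
    ultimately show "\<bar>g v\<bar> \<le> norm v" by linarith
  next
    show "g y = norm y" using gI[OF yM] .
  qed
qed



lemma norming_functional:
  fixes J :: "'b::real_normed_vector \<Rightarrow> 'b" and y :: 'b
  assumes JS: "scalar_structure cplx J" and y: "y \<noteq> 0"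
  shows "\<exists>f\<in>dual_sphere cplx J. Re (f y) = norm y"
proof -
  obtain g :: "'b \<Rightarrow> real" where gadd: "\<And>v w. g (v+w) = g v + g w" and gsc: "\<And>r v. g (r *\<^sub>R v) = r * g v"
    and gb: "\<And>v. \<bar>g v\<bar> \<le> norm v" and gy: "g y = norm y"
    using hahn_banach_real[OF y] by blast
  have gneg: "g (- v) = - g v" for v using gsc[of "-1" v] by simp
  have ny: "norm y > 0" using y by simp
  show ?thesis
  proof (cases cplx)
    case False
    define f where "f v = complex_of_real (g v)" for v
    have bl: "bounded_linear f"
      by (rule bounded_linear_intro[of _ 1]) (auto simp: f_def gadd gsc gb scaleR_conv_of_real)
    have "onorm f \<le> 1" by (rule onorm_bound) (auto simp: f_def gb)
    moreover have "norm (f y) / norm y \<le> onorm f" by (rule le_onorm[OF bl])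
    then have "1 \<le> onorm f" using ny by (simp add: f_def gy)
    ultimately have "f \<in> dual_sphere cplx J"
      unfolding dual_sphere_def kfun_def using bl False by (simp add: f_def)
    then show ?thesis by (intro bexI[of _ f]) (auto simp: f_def gy)
  next
    case True
    have Jlin: "linear J" and JJ: "\<And>x. J (J x) = - x"
      and Jn: "\<And>a b x. norm (a *\<^sub>R x + b *\<^sub>R J x) = cmod (Complex a b) * norm x"
      using JS True unfolding scalar_structure_def by auto
    have Jadd: "J (v + w) = J v + J w" for v w using Jlin by (simp add: linear_add)
    have Jsc: "J (r *\<^sub>R v) = r *\<^sub>R J v" for r v using Jlin by (simp add: linear_scale)
    define f where "f v = Complex (g v) (- g (J v))" for v
    have fadd: "f (v + w) = f v + f w" for v w by (simp add: f_def Jadd gadd complex_eq_iff)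
    have fsc: "f (r *\<^sub>R v) = r *\<^sub>R f v" for r v by (simp add: f_def Jsc gsc complex_eq_iff)
    have fJ: "f (J v) = \<i> * f v" for v by (simp add: f_def JJ gneg complex_eq_iff)
    have fb: "norm (f v) \<le> norm v" for v
    proof (cases "f v = 0")
      case True then show ?thesis by simp
    next
      case False
      define p where "p = f v"
      define u where "u = cnj p / of_real (cmod p)"
      define w where "w = Re u *\<^sub>R v + Im u *\<^sub>R J v"
      have cp: "cmod p > 0" using False p_def by simp
      have "f w = Re u *\<^sub>R p + Im u *\<^sub>R (\<i> * p)" unfolding w_def p_def by (simp add: fadd fsc fJ)
      also have "\<dots> = u * p" by (simp add: complex_eq_iff algebra_simps)
      also have "\<dots> = of_real (cmod p)"
      proof -
        have "cnj p * p = of_real ((cmod p)^2)" using complex_norm_square[of p] by (simp add: mult.commute)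
        then show ?thesis using cp unfolding u_def by (simp add: power2_eq_square field_simps)
      qed
      finally have "Re (f w) = cmod p" by simp
      moreover have "Re (f w) = g w" by (simp add: f_def)
      moreover have "norm w = cmod u * norm v" unfolding w_def Jn by simp
      moreover have "cmod u = 1" unfolding u_def using cp by (simp add: norm_divide)
      ultimately show ?thesis using gb[of w] p_def by simp
    qed
    have bl: "bounded_linear f"
      by (rule bounded_linear_intro[of _ 1]) (auto simp: fadd fsc fb)
    have "onorm f \<le> 1" by (rule onorm_bound) (auto simp: fb)
    have "norm (f y) / norm y \<le> onorm f" by (rule le_onorm[OF bl])
    moreover have "norm y \<le> norm (f y)" using complex_Re_le_cmod[of "f y"] by (simp add: f_def gy)
    ultimately have "norm y / norm y \<le> onorm f" using ny by (meson divide_right_mono order_trans less_imp_le)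
    then have "1 \<le> onorm f" using ny by simp
    with \<open>onorm f \<le> 1\<close> have "f \<in> dual_sphere cplx J"
      unfolding dual_sphere_def kfun_def using bl True fJ by simp
    then show ?thesis by (intro bexI[of _ f]) (auto simp: f_def gy)
  qed
qed



definition Bset :: "bool \<Rightarrow> ('b::real_normed_vector \<Rightarrow> 'b) \<Rightarrow> ('a::real_normed_vector \<Rightarrow> 'b)
    \<Rightarrow> ('a \<Rightarrow> 'b) \<Rightarrow> real \<Rightarrow> complex set" where
  "Bset cplx JY G T \<delta> = {f (T x) | x f. norm x = 1 \<and> f \<in> dual_sphere cplx JY \<and> Re (f (G x)) > 1 - \<delta>}"

lemma Vrange_Bset: "Vrange cplx JY G T = (\<Inter>\<delta>\<in>{0<..}. closure (Bset cplx JY G T \<delta>))"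
  unfolding Vrange_def Bset_def by simp

lemma dual_norm: "f \<in> dual_sphere cplx JY \<Longrightarrow> norm (f v) \<le> norm v"
  unfolding dual_sphere_def kfun_def using onorm[of f v] by auto

lemma dual_bl: "f \<in> dual_sphere cplx JY \<Longrightarrow> bounded_linear f"
  unfolding dual_sphere_def kfun_def by auto

lemma exists_near_norming:
  fixes G :: "'a::real_normed_vector \<Rightarrow> 'b::real_normed_vector"
  assumes G: "bounded_linear G" and nG: "onorm G = 1" and d: "\<delta> > 0"
  shows "\<exists>x. norm x = 1 \<and> norm (G x) > 1 - \<delta> \<and> G x \<noteq> 0"
proof (rule ccontr)
  assume A: "\<not> ?thesis"
  define m where "m = max 0 (1 - \<delta>)"
  have m0: "0 \<le> m" and m1: "m < 1" using d by (auto simp: m_def)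
  have "norm (G x) \<le> m * norm x" for x
  proof (cases "x = 0")
    case True then show ?thesis using G by (simp add: linear_simps)
  next
    case False
    define u where "u = inverse (norm x) *\<^sub>R x"
    have nu: "norm u = 1" using False by (simp add: u_def)
    have "norm (G u) \<le> m" using A nu m_def by force
    moreover have "G u = inverse (norm x) *\<^sub>R G x" unfolding u_def
      using G by (simp add: linear_simps)
    ultimately have "inverse (norm x) * norm (G x) \<le> m" by simp
    then show ?thesis using False by (simp add: field_simps)
  qed
  then have "onorm G \<le> m" by (intro onorm_bound m0)
  then show False using nG m1 by simp
qed

context
  fixes cplx and JY :: "'b::real_normed_vector \<Rightarrow> 'b" and G :: "'a::real_normed_vector \<Rightarrow> 'b"
  assumes JS: "scalar_structure cplx JY" and G: "bounded_linear G" and nG: "onorm G = 1"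
begin

lemma Bset_ne: "\<delta> > 0 \<Longrightarrow> Bset cplx JY G T \<delta> \<noteq> {}"
proof -
  assume d: "\<delta> > 0"
  obtain x where x: "norm x = 1" "norm (G x) > 1 - \<delta>" "G x \<noteq> 0"
    using exists_near_norming[OF G nG d] by blast
  obtain f where f: "f \<in> dual_sphere cplx JY" "Re (f (G x)) = norm (G x)"
    using norming_functional[OF JS x(3)] by blast
  show ?thesis unfolding Bset_def using x f by force
qed

lemma Bset_mono: "\<delta> \<le> \<delta>' \<Longrightarrow> Bset cplx JY G T \<delta> \<subseteq> Bset cplx JY G T \<delta>'"
  unfolding Bset_def by force

lemma Bset_bound:
  assumes "z \<in> Bset cplx JY G T \<delta>"
  obtains x where "norm x = 1" "norm (G x) > 1 - \<delta>" "cmod z \<le> norm (T x)"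
proof -
  obtain x f where x: "z = f (T x)" "norm x = 1" "f \<in> dual_sphere cplx JY" "Re (f (G x)) > 1 - \<delta>"
    using assms unfolding Bset_def by blast
  have "Re (f (G x)) \<le> norm (G x)" using order_trans[OF complex_Re_le_cmod dual_norm[OF x(3)]] .
  then show ?thesis using that[of x] x dual_norm[OF x(3)] by force
qed

lemma Bset_cball:
  assumes T: "bounded_linear T"
  shows "Bset cplx JY G T \<delta> \<subseteq> cball 0 (onorm T)"
proof
  fix z assume "z \<in> Bset cplx JY G T \<delta>"
  then obtain x where "norm x = 1" "cmod z \<le> norm (T x)" by (rule Bset_bound)
  moreover have "norm (T x) \<le> onorm T * norm x" by (rule onorm[OF T])
  ultimately show "z \<in> cball 0 (onorm T)" by simp
qed

lemma Vrange_cball: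
  assumes T: "bounded_linear T"
  shows "Vrange cplx JY G T \<subseteq> cball 0 (onorm T)"
proof -
  have "closure (Bset cplx JY G T 1) \<subseteq> cball 0 (onorm T)"
    by (rule closure_minimal[OF Bset_cball[OF T] closed_cball])
  then show ?thesis unfolding Vrange_Bset by auto
qed

lemma Vrange_ne:
  assumes T: "bounded_linear T"
  shows "Vrange cplx JY G T \<noteq> {}"
proof -
  let ?F = "(\<lambda>\<delta>. closure (Bset cplx JY G T \<delta>)) ` {0<..}"
  have "\<Inter>?F \<noteq> {}"
  proof (rule closed_fip_Heine_Borel)
    show "closure (Bset cplx JY G T 1) \<in> ?F" by auto
    show "bounded (closure (Bset cplx JY G T 1))"
      using Bset_cball[OF T] bounded_cball bounded_closure bounded_subset by metis
    show "\<And>S. S \<in> ?F \<Longrightarrow> closed S" by auto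
  next
    fix F' assume F': "finite F'" "F' \<subseteq> ?F"
    then obtain D where D: "D \<subseteq> {0<..}" "finite D" "F' = (\<lambda>\<delta>. closure (Bset cplx JY G T \<delta>)) ` D"
      by (metis finite_subset_image)
    show "\<Inter>F' \<noteq> {}"
    proof (cases "D = {}")
      case True then show ?thesis using D by simp
    next
      case False
      define m where "m = Min D"
      have m: "m > 0" using D False Min_in m_def by fastforce
      obtain z where z: "z \<in> Bset cplx JY G T m" using Bset_ne[OF m] by blast
      have "z \<in> \<Inter>F'"
      proof -
        have "z \<in> closure (Bset cplx JY G T \<delta>)" if "\<delta> \<in> D" for \<delta>
        proof -
          have "m \<le> \<delta>" using that D m_def by simp
          then show ?thesis using z Bset_mono closure_subset by blast
        qed
        then show ?thesis using D by auto
      qed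
      then show ?thesis by blast
    qed
  qed
  then show ?thesis unfolding Vrange_Bset by simp
qed

lemma nradius_facts:
  assumes T: "bounded_linear T"
  shows "0 \<le> nradius cplx JY G T" "bdd_above (cmod ` Vrange cplx JY G T)"
    "\<And>z. z \<in> Vrange cplx JY G T \<Longrightarrow> cmod z \<le> nradius cplx JY G T"
proof -
  show bdd: "bdd_above (cmod ` Vrange cplx JY G T)"
    using Vrange_cball[OF T] unfolding bdd_above_def by force
  show le: "\<And>z. z \<in> Vrange cplx JY G T \<Longrightarrow> cmod z \<le> nradius cplx JY G T"
    unfolding nradius_def by (rule cSup_upper[OF _ bdd]) simp
  obtain z where "z \<in> Vrange cplx JY G T" using Vrange_ne[OF T] by blast
  then show "0 \<le> nradius cplx JY G T" using le[of z] by (meson norm_ge_zero order_trans)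
qed

lemma nradius_le_Gnorm:
  assumes T: "bounded_linear T"
  shows "nradius cplx JY G T \<le> Gnorm G T"
proof -
  let ?s = "\<lambda>\<delta>. SUP x\<in>{x. norm x = 1 \<and> norm (G x) > 1 - \<delta>}. norm (T x)"
  have "cmod z \<le> Gnorm G T" if z: "z \<in> Vrange cplx JY G T" for z
    unfolding Gnorm_def
  proof (rule cINF_greatest)
    show "{0::real<..} \<noteq> {}" by auto
  next
    fix \<delta> :: real assume d: "\<delta> \<in> {0<..}"
    have "Bset cplx JY G T \<delta> \<subseteq> cball 0 (?s \<delta>)"
    proof
      fix w assume "w \<in> Bset cplx JY G T \<delta>"
      then obtain x where x: "norm x = 1" "norm (G x) > 1 - \<delta>" "cmod w \<le> norm (T x)" by (rule Bset_bound)
      have "norm (T x) \<le> ?s \<delta>"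
      proof (rule cSUP_upper)
        show "x \<in> {x. norm x = 1 \<and> norm (G x) > 1 - \<delta>}" using x by simp
        show "bdd_above ((\<lambda>x. norm (T x)) ` {x. norm x = 1 \<and> norm (G x) > 1 - \<delta>})"
          by (rule bdd_aboveI[of _ "onorm T"]) (use onorm[OF T] in \<open>auto, metis mult.right_neutral\<close>)
      qed
      then show "w \<in> cball 0 (?s \<delta>)" using x by simp
    qed
    then have "closure (Bset cplx JY G T \<delta>) \<subseteq> cball 0 (?s \<delta>)"
      by (rule closure_minimal[OF _ closed_cball])
    moreover have "z \<in> closure (Bset cplx JY G T \<delta>)" using z d unfolding Vrange_Bset by blast
    ultimately show "cmod z \<le> ?s \<delta>" by auto
  qed
  then show ?thesis unfolding nradius_def
    by (intro cSup_least) (use Vrange_ne[OF T] in auto)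
qed

lemma Vrange_scale:
  assumes c: "c > 0" and z: "z \<in> Vrange cplx JY G (\<lambda>x. inverse c *\<^sub>R T x)"
  shows "c *\<^sub>R z \<in> Vrange cplx JY G T"
proof -
  have "c *\<^sub>R z \<in> closure (Bset cplx JY G T \<delta>)" if d: "\<delta> > 0" for \<delta>
  proof -
    have sub: "(\<lambda>w. c *\<^sub>R w) ` Bset cplx JY G (\<lambda>x. inverse c *\<^sub>R T x) \<delta> \<subseteq> Bset cplx JY G T \<delta>"
    proof
      fix w assume "w \<in> (\<lambda>w. c *\<^sub>R w) ` Bset cplx JY G (\<lambda>x. inverse c *\<^sub>R T x) \<delta>"
      then obtain x f where x: "w = c *\<^sub>R f (inverse c *\<^sub>R T x)" "norm x = 1" "f \<in> dual_sphere cplx JY" "Re (f (G x)) > 1 - \<delta>"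
        unfolding Bset_def by blast
      have "f (inverse c *\<^sub>R T x) = inverse c *\<^sub>R f (T x)"
        using dual_bl[OF x(3)] by (simp add: linear_simps)
      then have "w = f (T x)" using x(1) c by simp
      then show "w \<in> Bset cplx JY G T \<delta>" unfolding Bset_def using x by blast
    qed
    have "z \<in> closure (Bset cplx JY G (\<lambda>x. inverse c *\<^sub>R T x) \<delta>)" using z d unfolding Vrange_Bset by blast
    then have "c *\<^sub>R z \<in> (\<lambda>w. c *\<^sub>R w) ` closure (Bset cplx JY G (\<lambda>x. inverse c *\<^sub>R T x) \<delta>)" by blast
    also have "\<dots> = closure ((\<lambda>w. c *\<^sub>R w) ` Bset cplx JY G (\<lambda>x. inverse c *\<^sub>R T x) \<delta>)"
      by (rule closure_scaleR)
    also have "\<dots> \<subseteq> closure (Bset cplx JY G T \<delta>)" by (rule closure_mono[OF sub])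
    finally show ?thesis .
  qed
  then show ?thesis unfolding Vrange_Bset by blast
qed

end



theorem proposition3p5:
  fixes cplx :: bool
    and JX :: "'a::banach \<Rightarrow> 'a" and JY :: "'b::banach \<Rightarrow> 'b"
    and G :: "'a \<Rightarrow> 'b"
  assumes "scalar_structure cplx JX" and "scalar_structure cplx JY"
    and "kop cplx JX JY G" and "onorm G = 1"
    and "Gnorm_is_norm cplx JX JY G"
    and "nG2 cplx JX JY G = 1"
  shows "nG1 cplx JX JY G = nG cplx JX JY G"
proof -
  note JS = assms(2)
  have G: "bounded_linear G" using assms(3) unfolding kop_def by simp
  note nGG = assms(4)
  have Gpos: "\<And>T. kop cplx JX JY T \<Longrightarrow> 0 \<le> Gnorm G T"
    and Ghom: "\<And>T c. kop cplx JX JY T \<Longrightarrow> Gnorm G (\<lambda>x. c *\<^sub>R T x) = \<bar>c\<bar> * Gnorm G T"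
    using assms(5) unfolding Gnorm_is_norm_def by blast+
  have key: "nradius cplx JY G T = Gnorm G T" if kT: "kop cplx JX JY T" for T
  proof -
    have T: "bounded_linear T" using kT unfolding kop_def by simp
    have le: "nradius cplx JY G T \<le> Gnorm G T" by (rule nradius_le_Gnorm[OF JS G nGG T])
    have ge: "Gnorm G T \<le> nradius cplx JY G T"
    proof (cases "Gnorm G T = 0")
      case True then show ?thesis using nradius_facts(1)[OF JS G nGG T] by simp
    next
      case False
      define c where "c = Gnorm G T"
      have c: "c > 0" using False Gpos[OF kT] c_def by simp
      define T' where "T' = (\<lambda>x. inverse c *\<^sub>R T x)"
      have T': "bounded_linear T'" unfolding T'_def by (rule bounded_linear_const_scaleR[OF T])
      have kT': "kop cplx JX JY T'"
        unfolding kop_def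
      proof (intro conjI impI allI)
        show "bounded_linear T'" by (rule T')
      next
        fix x assume cp: cplx
        have "linear JY" using JS cp unfolding scalar_structure_def by simp
        then show "T' (JX x) = JY (T' x)" using kT cp unfolding T'_def kop_def by (simp add: linear_scale)
      qed
      have GT': "Gnorm G T' = 1" unfolding T'_def using Ghom[OF kT, of "inverse c"] c c_def by simp
      have bddS: "bdd_below {nradius cplx JY G T | T. kop cplx JX JY T \<and> Gnorm G T = 1}"
        by (rule bdd_belowI[of _ 0]) (auto simp: kop_def intro: nradius_facts(1)[OF JS G nGG])
      have mem: "nradius cplx JY G T' \<in> {nradius cplx JY G T | T. kop cplx JX JY T \<and> Gnorm G T = 1}"
        using kT' GT' by blast
      have "1 \<le> nradius cplx JY G T'"
        using cInf_lower[OF mem bddS] assms(6) unfolding nG2_def by simp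
      also have "nradius cplx JY G T' \<le> nradius cplx JY G T / c"
        unfolding nradius_def[of _ _ _ T']
      proof (rule cSup_least)
        show "cmod ` Vrange cplx JY G T' \<noteq> {}" using Vrange_ne[OF JS G nGG T'] by simp
      next
        fix r assume "r \<in> cmod ` Vrange cplx JY G T'"
        then obtain z where z: "z \<in> Vrange cplx JY G T'" "r = cmod z" by blast
        have "c *\<^sub>R z \<in> Vrange cplx JY G T" using Vrange_scale[OF JS G nGG c] z T'_def by blast
        then have "cmod (c *\<^sub>R z) \<le> nradius cplx JY G T" by (rule nradius_facts(3)[OF JS G nGG T])
        then have "c * cmod z \<le> nradius cplx JY G T" using c by simp
        then show "r \<le> nradius cplx JY G T / c" using z c by (simp add: field_simps)
      qed
      finally have "c \<le> nradius cplx JY G T" using c by (simp add: field_simps)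
      then show ?thesis using c_def by simp
    qed
    show ?thesis using le ge by simp
  qed
  have "{nradius cplx JY G T | T. kop cplx JX JY T \<and> onorm T = 1} = {Gnorm G T | T. kop cplx JX JY T \<and> onorm T = 1}"
    using key by metis
  then show ?thesis unfolding nG1_def nG_def by simp
qed

end
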